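(* Let the parent function on $Q_1\setminus\{o\}$ be defined by the rule below, and for $p\in Q_1$ let $R(p)$ be the set consisting of $p$, its parent, the parent of its parent, and so on until $o$ is reached. Then for every $p\in Q_1$, $R(p)$ has error less than $1.5$ in the $L_\infty$ metric, i.e. every $v\in R(p)$ has $L_\infty$ distance less than $1.5$ from the Euclidean segment $\overline{op}$. Parent rule, applied to each $p\in Q_1\setminus\{o\}$ (first applicable case): (1) if $p_x\le 1$ and $p\neq(1,0)$, the parent is $p^\downarrow$; (2) else if $p_y\le 1$, the parent is $p^\leftarrow$; (3) else if $p_y=2$ and $D(p)$ is a power of $2$, the parent is $p^\downarrow$; (4) else if $D(p)-1$ is a power of $2$, the parent is whichever of $p^\downarrow,p^\leftarrow$ has odd $x$-coordinate; (5) otherwise, let $Z_i^j$ be the zone containing $p$, and the parent is whichever of $p^\downarrow,p^\leftarrow$ is closer to the point $\mathrm{Mid}(i,j,D(p)-1)$, ties broken arbitrarily.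
   Context: Let $o=(0,0)$ and $Q_1=\{p\in\mathbb{Z}^2: p_x\ge0,p_y\ge0\}$. For $p\in\mathbb{Z}^2$ let $D(p)=p_x+p_y$ (the diagonal of $p$), $p^\leftarrow=(p_x-1,p_y)$, $p^\downarrow=(p_x,p_y-1)$. For a point $q\ne o$ in the closed first quadrant let $M(q)=q_y/q_x$ if $q_x>0$ and $M(q)=\infty$ otherwise, and let $\ell(q)$ be the Euclidean line through $o$ and $q$. A point $r$ is "below $\ell(q)$" if $M(r)\le M(q)$ and "above $\ell(q)$" if $M(r)>M(q)$. For integers $i\ge2$ and $1\le j\le 2^i-1$ let $v_i^j=(j,2^i-j)$. For $1\le j\le 2^i-2$, the zone $Z_i^j$ is the set of all $r\in\mathbb{R}^2$ in the first quadrant with $2^i<r_x+r_y\le 2^{i+1}$, $r$ below $\ell(v_i^j)$ and $r$ above $\ell(v_i^{j+1})$. For a real $d$ with $2^i<d<2^{i+1}$, $\mathrm{Mid}(i,j,d)$ is the point on the line $x+y=d$ whose $L_\infty$ distances to $\ell(v_i^j)$ and $\ell(v_i^{j+1})$ are equal (the midpoint of the two intersection points of these lines with $x+y=d$). "Closer" in case (5) refers to $L_\infty$ distance. (Every point reaching case (5) lies in exactly one zone.) *)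

theory Defs
  imports Complex_Main "HOL-Library.Extended_Real"
begin

type_synonym pt = "int \<times> int"

definition orig :: pt where "orig = (0, 0)"

definition Q1 :: "pt set" where "Q1 = {p. fst p \<ge> 0 \<and> snd p \<ge> 0}"

definition diag :: "pt \<Rightarrow> int" where "diag p = fst p + snd p"

definition left_of :: "pt \<Rightarrow> pt" where "left_of p = (fst p - 1, snd p)"
definition down_of :: "pt \<Rightarrow> pt" where "down_of p = (fst p, snd p - 1)"

definition is_pow2 :: "int \<Rightarrow> bool" where "is_pow2 n \<longleftrightarrow> (\<exists>k::nat. n = 2 ^ k)"

definition slope :: "real \<times> real \<Rightarrow> ereal" where
  "slope q = (if fst q > 0 then ereal (snd q / fst q) else \<infinity>)"

definition below_line :: "real \<times> real \<Rightarrow> real \<times> real \<Rightarrow> bool" where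
  "below_line r q \<longleftrightarrow> slope r \<le> slope q"
definition above_line :: "real \<times> real \<Rightarrow> real \<times> real \<Rightarrow> bool" where
  "above_line r q \<longleftrightarrow> slope r > slope q"

definition vij :: "nat \<Rightarrow> int \<Rightarrow> real \<times> real" where
  "vij i j = (real_of_int j, 2 ^ i - real_of_int j)"

definition zone :: "nat \<Rightarrow> int \<Rightarrow> (real \<times> real) set" where
  "zone i j = {r. fst r \<ge> 0 \<and> snd r \<ge> 0 \<and> 2 ^ i < fst r + snd r \<and> fst r + snd r \<le> 2 ^ (i + 1)
                 \<and> below_line r (vij i j) \<and> above_line r (vij i (j + 1))}"

text \<open>Intersection of the line through o and v (with v in the open first quadrant) with x + y = d.\<close>
definition diag_inter :: "real \<times> real \<Rightarrow> real \<Rightarrow> real \<times> real" where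
  "diag_inter v d = (d * fst v / (fst v + snd v), d * snd v / (fst v + snd v))"

definition Mid :: "nat \<Rightarrow> int \<Rightarrow> real \<Rightarrow> real \<times> real" where
  "Mid i j d = (let a = diag_inter (vij i j) d; b = diag_inter (vij i (j + 1)) d
                in ((fst a + fst b) / 2, (snd a + snd b) / 2))"

definition to_real :: "pt \<Rightarrow> real \<times> real" where
  "to_real p = (real_of_int (fst p), real_of_int (snd p))"

definition linf :: "real \<times> real \<Rightarrow> real \<times> real \<Rightarrow> real" where
  "linf a b = max \<bar>fst a - fst b\<bar> \<bar>snd a - snd b\<bar>"

text \<open>The parent rule; in case (5) ties are broken arbitrarily, so the rule is a relation
  that a parent function must satisfy at every p in Q1 - {o}.\<close>
definition parent_ok :: "pt \<Rightarrow> pt \<Rightarrow> bool" where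
  "parent_ok p q \<longleftrightarrow>
    (if fst p \<le> 1 \<and> p \<noteq> (1, 0) then q = down_of p
     else if snd p \<le> 1 then q = left_of p
     else if snd p = 2 \<and> is_pow2 (diag p) then q = down_of p
     else if is_pow2 (diag p - 1) then
       q \<in> {down_of p, left_of p} \<and> odd (fst q)
     else
       q \<in> {down_of p, left_of p} \<and>
       (\<forall>i j. 2 \<le> i \<longrightarrow> 1 \<le> j \<longrightarrow> j \<le> 2 ^ i - 2 \<longrightarrow> to_real p \<in> zone i j \<longrightarrow>
          (\<forall>q' \<in> {down_of p, left_of p}.
             linf (to_real q) (Mid i j (real_of_int (diag p - 1)))
               \<le> linf (to_real q') (Mid i j (real_of_int (diag p - 1))))))"

definition valid_parent :: "(pt \<Rightarrow> pt) \<Rightarrow> bool" where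
  "valid_parent par \<longleftrightarrow> (\<forall>p \<in> Q1 - {orig}. parent_ok p (par p))"

definition Rset :: "(pt \<Rightarrow> pt) \<Rightarrow> pt \<Rightarrow> pt set" where
  "Rset par p = {(par ^^ k) p | k. \<forall>m < k. (par ^^ m) p \<noteq> orig}"

definition seg_dist :: "pt \<Rightarrow> pt \<Rightarrow> real" where
  "seg_dist v p = (INF t \<in> {0..1::real}. linf (to_real v) (t * real_of_int (fst p), t * real_of_int (snd p)))"

end

theory Submission
  imports Defs
begin


lemma po1: "parent_ok p q \<Longrightarrow> fst p \<le> 1 \<Longrightarrow> p \<noteq> (1,0) \<Longrightarrow> q = down_of p"
  unfolding parent_ok_def by simp
lemma po2: "parent_ok p q \<Longrightarrow> \<not>(fst p \<le> 1 \<and> p \<noteq> (1,0)) \<Longrightarrow> snd p \<le> 1 \<Longrightarrow> q = left_of p"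
  unfolding parent_ok_def by simp
lemma po3: "parent_ok p q \<Longrightarrow> fst p \<ge> 2 \<Longrightarrow> snd p = 2 \<Longrightarrow> is_pow2 (diag p) \<Longrightarrow> q = down_of p"
  unfolding parent_ok_def by simp
lemma po4: "parent_ok p q \<Longrightarrow> fst p \<ge> 2 \<Longrightarrow> snd p \<ge> 2 \<Longrightarrow> \<not>(snd p = 2 \<and> is_pow2 (diag p))
   \<Longrightarrow> is_pow2 (diag p - 1) \<Longrightarrow> q \<in> {down_of p, left_of p} \<and> odd (fst q)"
  unfolding parent_ok_def by auto
lemma po5: "parent_ok p q \<Longrightarrow> fst p \<ge> 2 \<Longrightarrow> snd p \<ge> 2 \<Longrightarrow> \<not>(snd p = 2 \<and> is_pow2 (diag p))
   \<Longrightarrow> \<not> is_pow2 (diag p - 1) \<Longrightarrow> q \<in> {down_of p, left_of p} \<and>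
       (\<forall>i j. 2 \<le> i \<longrightarrow> 1 \<le> j \<longrightarrow> j \<le> 2 ^ i - 2 \<longrightarrow> to_real p \<in> zone i j \<longrightarrow>
          (\<forall>q' \<in> {down_of p, left_of p}.
             linf (to_real q) (Mid i j (real_of_int (diag p - 1)))
               \<le> linf (to_real q') (Mid i j (real_of_int (diag p - 1)))))"
  unfolding parent_ok_def by auto

lemma po_mem: "q \<in> {down_of p, left_of p}" if "parent_ok p q" "fst p \<ge> 2" "snd p \<ge> 2"
proof (cases "snd p = 2 \<and> is_pow2 (diag p)")
  case True then have "q = down_of p" using po3[OF that(1)] that(2) by blast
  then show ?thesis by simp
next
  case n3: False
  show ?thesis
  proof (cases "is_pow2 (diag p - 1)")
    case True show ?thesis using conjunct1[OF po4[OF that(1) that(2) that(3) n3 True]] .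
  next
    case False show ?thesis using conjunct1[OF po5[OF that(1) that(2) that(3) n3 False]] .
  qed
qed

lemma pow2_self: "is_pow2 (2^k)" unfolding is_pow2_def by auto

lemma pow2_between: assumes "is_pow2 z" "2^i < z" "z < 2^(i+1)" shows False
proof -
  obtain k::nat where z: "z = 2^k" using assms(1) unfolding is_pow2_def by auto
  have "i < k" using assms(2) z by (metis power_strict_increasing_iff one_less_numeral_iff semiring_norm(76) of_nat_less_iff)
  moreover have "k < i+1" using assms(3) z by (metis power_strict_increasing_iff one_less_numeral_iff semiring_norm(76))
  ultimately show False by simp
qed

lemma pow2_succ: assumes "is_pow2 (2^i + 1)" "i \<ge> 1" shows False
proof -
  obtain k::nat where z: "(2::int)^i + 1 = 2^k" using assms(1) unfolding is_pow2_def by auto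
  have "even ((2::int)^k)" proof (cases k) case 0 then have "(2::int)^i + 1 = 1" using z by simp
      moreover have "(2::int)^i > 0" by simp
      ultimately show ?thesis by simp next case (Suc m) then show ?thesis by simp qed
  moreover have "even ((2::int)^i)" using assms(2) by (cases i) auto
  ultimately show False using z by (metis even_plus_one_iff)
qed

lemma ex_level: fixes n :: nat assumes "n \<ge> 2" shows "\<exists>i. 2^i < n \<and> n \<le> 2^(i+1)"
  using assms
proof (induction n rule: less_induct)
  case (less n)
  show ?case
  proof (cases "n \<le> 4")
    case True
    then have "n = 2 \<or> n = 3 \<or> n = 4" using less.prems by auto
    then show ?thesis by (elim disjE) (rule exI[of _ 0], simp, rule exI[of _ 1], simp, rule exI[of _ 1], simp)
  next
    case False
    have "(n+1) div 2 < n" "2 \<le> (n+1) div 2" using False by auto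
    then obtain i where i: "2^i < (n+1) div 2" "(n+1) div 2 \<le> 2^(i+1)" using less.IH[of "(n+1) div 2"] by auto
    define m :: nat where "m = 2^i"
    have "2*m < n" "n \<le> 2*(2*m)" using i unfolding m_def[symmetric] power_add by auto
    then show ?thesis by (intro exI[of _ "i+1"]) (simp add: m_def)
  qed
qed



definition Er :: "real \<Rightarrow> pt \<Rightarrow> real" where
  "Er a w = real_of_int (fst w) - real_of_int (diag w) * a"

definition chainok :: "(pt \<Rightarrow> pt) \<Rightarrow> real \<Rightarrow> pt \<Rightarrow> bool" where
  "chainok par a w \<longleftrightarrow> (\<forall>s::nat. s \<le> nat (diag w) \<longrightarrow> \<bar>Er a ((par ^^ s) w)\<bar> < 3/2)"

lemma chainok_orig: "chainok par a orig"
  unfolding chainok_def orig_def diag_def Er_def by simp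

lemma chainok_step:
  assumes "\<bar>Er a w\<bar> < 3/2" "chainok par a (par w)" "diag (par w) = diag w - 1" "diag w \<ge> 1"
  shows "chainok par a w"
  unfolding chainok_def
proof (intro allI impI)
  fix s :: nat assume s: "s \<le> nat (diag w)"
  show "\<bar>Er a ((par ^^ s) w)\<bar> < 3/2"
  proof (cases s)
    case 0 then show ?thesis using assms(1) by simp
  next
    case (Suc s')
    have "(par ^^ s) w = (par ^^ s') (par w)" using Suc by (simp add: funpow_swap1)
    moreover have "s' \<le> nat (diag (par w))" using s Suc assms(3,4) by auto
    ultimately show ?thesis using assms(2) unfolding chainok_def by auto
  qed
qed

lemma par_step:
  assumes "valid_parent par" "w \<in> Q1" "w \<noteq> orig"
  shows "(par w = down_of w \<or> par w = left_of w) \<and> par w \<in> Q1"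
proof -
  have po: "parent_ok w (par w)" using assms unfolding valid_parent_def by auto
  obtain x y where w: "w = (x,y)" by (cases w)
  have xy: "x \<ge> 0" "y \<ge> 0" "(x,y) \<noteq> (0,0)" using assms(2,3) w unfolding Q1_def orig_def by auto
  show ?thesis
  proof (cases "x \<le> 1 \<and> w \<noteq> (1,0)")
    case True
    then have "par w = down_of w" using po1[OF po] w by auto
    moreover have "y \<ge> 1" using True xy w by (cases "y = 0") auto
    ultimately show ?thesis using w xy unfolding down_of_def Q1_def by auto
  next
    case c1: False
    show ?thesis
    proof (cases "y \<le> 1")
      case True
      then have "par w = left_of w" using po2[OF po] w c1 by auto
      moreover have "x \<ge> 1" using c1 w by auto
      ultimately show ?thesis using w xy unfolding left_of_def Q1_def by auto
    next
      case c2: False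
      have x2: "x \<ge> 2" "y \<ge> 2" using c1 c2 w by auto
      have "par w \<in> {down_of w, left_of w}" using po_mem[OF po] x2 w by auto
      then show ?thesis using w x2 unfolding down_of_def left_of_def Q1_def by auto
    qed
  qed
qed

lemma diag_step: "par w = down_of w \<or> par w = left_of w \<Longrightarrow> diag (par w) = diag w - 1"
  unfolding down_of_def left_of_def diag_def by auto

lemma chain:
  assumes "valid_parent par" "p \<in> Q1"
  shows "s \<le> nat (diag p) \<Longrightarrow> (par ^^ s) p \<in> Q1 \<and> diag ((par ^^ s) p) = diag p - int s"
proof (induction s)
  case 0 then show ?case using assms by simp
next
  case (Suc s)
  let ?w = "(par ^^ s) p"
  have w: "?w \<in> Q1" "diag ?w = diag p - int s" using Suc by auto
  have "?w \<noteq> orig" using w Suc.prems unfolding orig_def diag_def by auto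
  then have "(par ?w = down_of ?w \<or> par ?w = left_of ?w) \<and> par ?w \<in> Q1" using par_step assms w by blast
  then show ?case using w diag_step by auto
qed

lemma chain_end:
  assumes "valid_parent par" "p \<in> Q1"
  shows "(par ^^ nat (diag p)) p = orig"
proof -
  have "diag p \<ge> 0" using assms(2) unfolding Q1_def diag_def by auto
  then have "(par ^^ nat (diag p)) p \<in> Q1 \<and> diag ((par ^^ nat (diag p)) p) = 0" using chain[OF assms, of "nat (diag p)"] by auto
  moreover obtain u v where "(par ^^ nat (diag p)) p = (u,v)" by (cases "(par ^^ nat (diag p)) p")
  ultimately show ?thesis unfolding Q1_def diag_def orig_def by auto
qed



lemma Mid_eq: "Mid i j D = (D * (2*j+1) / 2^(i+1), D - D * (2*j+1) / 2^(i+1))"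
  unfolding Mid_def diag_inter_def vij_def Let_def by (simp add: field_simps)

lemma linf_Mid:
  assumes "real_of_int u + real_of_int v = D"
  shows "linf (to_real (u,v)) (Mid i j D) = \<bar>real_of_int u - D * (2*j+1) / 2^(i+1)\<bar>"
proof -
  have "real_of_int v - (D - D * (2*j+1) / 2^(i+1)) = - (real_of_int u - D * (2*j+1) / 2^(i+1))"
    using assms by simp
  then show ?thesis unfolding linf_def Mid_eq to_real_def by simp
qed

lemma in_zone:
  fixes x y j :: int
  assumes "x > 0" "y \<ge> 0" "j \<ge> 1" "2^i < x + y" "x + y \<le> 2^(i+1)"
    "(x+y)*j \<le> x*2^i" "x*2^i < (x+y)*(j+1)"
  shows "to_real (x,y) \<in> zone i j"
proof -
  have rx: "real_of_int x > 0" using assms by simp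
  have rj: "real_of_int j > 0" using assms by simp
  have a: "real_of_int ((x+y)*j) \<le> real_of_int (x*2^i)" using assms(6) by linarith
  have b: "real_of_int (x*2^i) < real_of_int ((x+y)*(j+1))" using assms(7) by linarith
  have "real_of_int y / real_of_int x \<le> (2^i - real_of_int j) / real_of_int j"
    using a rx rj by (simp add: divide_simps algebra_simps)
  then have bl: "below_line (to_real (x,y)) (vij i j)"
    unfolding below_line_def slope_def to_real_def vij_def using rx rj by simp
  have "real_of_int y / real_of_int x > (2^i - real_of_int (j+1)) / real_of_int (j+1)"
    using b rx rj by (simp add: divide_simps algebra_simps)
  then have al: "above_line (to_real (x,y)) (vij i (j+1))"
    unfolding above_line_def slope_def to_real_def vij_def using rx rj by simp
  have c: "real_of_int (2^i) < real_of_int (x+y)" "real_of_int (x+y) \<le> real_of_int (2^(i+1))"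
    using assms(4,5) by linarith+
  show ?thesis unfolding zone_def using bl al c assms(1,2) by (simp add: to_real_def)
qed



lemma zone_step:
  fixes x y j :: int and i :: nat
  assumes valid: "valid_parent par" and i2: "i \<ge> 2" and j1: "1 \<le> j" and jK: "j \<le> 2^i - 2"
    and d1: "2^i + 1 < x + y" and d2: "x + y \<le> 2*2^i"
    and z1: "(x+y)*j \<le> x*2^i" and z2: "x*2^i < (x+y)*(j+1)"
  shows "par (x,y) \<in> {(x,y-1),(x-1,y)} \<and>
    (\<forall>x'\<in>{x, x-1}. \<bar>real_of_int (fst (par (x,y))) - real_of_int (x+y-1) * (2*j+1) / 2^(i+1)\<bar>
                    \<le> \<bar>real_of_int x' - real_of_int (x+y-1) * (2*j+1) / 2^(i+1)\<bar>)"
proof -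
  define K :: int where "K = 2^i"
  have K4: "K \<ge> 4" unfolding K_def using i2
    by (metis power_increasing numeral_le_one_iff semiring_norm(69) power2_eq_square numeral_Bit0 num_double mult_2 One_nat_def numeral_2_eq_2 one_le_numeral)
  have Kd1: "K + 1 < x + y" and Kd2: "x + y \<le> 2*K" and Kz1: "(x+y)*j \<le> x*K" and Kz2: "x*K < (x+y)*(j+1)"
    and KjK: "j \<le> K - 2" using d1 d2 z1 z2 jK unfolding K_def by auto
  have "(x+y)*j > K*j" using Kd1 j1 by (intro mult_strict_right_mono) auto
  then have "x*K > j*K" using Kz1 by (simp add: mult.commute)
  then have xj: "x > j" using K4 by (simp add: mult_less_cancel_right)
  have "y*K > (x+y)*(K-j-1)" using Kz2 by (simp add: algebra_simps)
  moreover have "(x+y)*(K-j-1) \<ge> (x+y)*1" using KjK Kd1 K4 by (intro mult_left_mono) auto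
  ultimately have yK: "y*K > x+y" by simp
  then have "y*K > K*1" using Kd1 by simp
  then have y2: "y \<ge> 2" using K4 by (simp add: mult.commute mult_less_cancel_left)
  have x2: "x \<ge> 2" using xj j1 by simp
  have n3: "\<not> (snd (x,y) = 2 \<and> is_pow2 (diag (x,y)))"
  proof
    assume h: "snd (x,y) = 2 \<and> is_pow2 (diag (x,y))"
    have "\<not> (x + y < 2^(i+1))" using pow2_between[of "x+y" i] h d1 unfolding diag_def by auto
    then have "x + y = 2*K" using d2 unfolding K_def by simp
    then have "(x+y)*(K-j-1) \<ge> (x+y)*1" using KjK Kd1 K4 by (intro mult_left_mono) auto
    moreover have "y*K = 2*K" using h by simp
    ultimately show False using \<open>(x+y)*(K-j-1) \<ge> (x+y)*1\<close>[simplified] \<open>y*K > (x+y)*(K-j-1)\<close> \<open>x + y = 2*K\<close> by linarith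
  qed
  have n4: "\<not> is_pow2 (diag (x,y) - 1)"
    using pow2_between[of "x+y-1" i] d1 d2 unfolding diag_def by auto
  have po: "parent_ok (x,y) (par (x,y))" using valid unfolding valid_parent_def Q1_def orig_def using x2 y2 by auto
  have zn: "to_real (x,y) \<in> zone i j" using in_zone[of x y j i] x2 y2 j1 d1 d2 z1 z2 by auto
  note P = po5[OF po _ _ n3 n4]
  have mem: "par (x,y) \<in> {(x,y-1),(x-1,y)}" using P x2 y2 unfolding down_of_def left_of_def by auto
  have cl: "\<forall>q' \<in> {down_of (x,y), left_of (x,y)}.
             linf (to_real (par (x,y))) (Mid i j (real_of_int (diag (x,y) - 1)))
               \<le> linf (to_real q') (Mid i j (real_of_int (diag (x,y) - 1)))"
    using P x2 y2 i2 j1 jK zn by auto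
  obtain u v where uv: "par (x,y) = (u,v)" by (cases "par (x,y)")
  have uvs: "real_of_int u + real_of_int v = real_of_int (x+y-1)" using mem uv by auto
  show ?thesis
  proof (intro conjI ballI mem)
    fix x' assume x': "x' \<in> {x, x-1}"
    have q': "(x', x+y-1-x') \<in> {down_of (x,y), left_of (x,y)}" using x' unfolding down_of_def left_of_def by auto
    have "linf (to_real (u,v)) (Mid i j (real_of_int (x+y-1))) \<le> linf (to_real (x', x+y-1-x')) (Mid i j (real_of_int (x+y-1)))"
      using cl q' uv unfolding diag_def by auto
    moreover have "linf (to_real (u,v)) (Mid i j (real_of_int (x+y-1))) = \<bar>real_of_int u - real_of_int (x+y-1) * (2*j+1) / 2^(i+1)\<bar>"
      by (rule linf_Mid[OF uvs])
    moreover have "linf (to_real (x', x+y-1-x')) (Mid i j (real_of_int (x+y-1))) = \<bar>real_of_int x' - real_of_int (x+y-1) * (2*j+1) / 2^(i+1)\<bar>"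
      by (rule linf_Mid) simp
    ultimately show "\<bar>real_of_int (fst (par (x,y))) - real_of_int (x+y-1) * (2*j+1) / 2^(i+1)\<bar>
                    \<le> \<bar>real_of_int x' - real_of_int (x+y-1) * (2*j+1) / 2^(i+1)\<bar>" using uv by simp
  qed
qed



definition InvR :: "real \<Rightarrow> real \<Rightarrow> real \<Rightarrow> real \<Rightarrow> bool" where
  "InvR b c X D \<longleftrightarrow> \<bar>X - D*c\<bar> \<le> 1/2 \<or> (X - D*c > 1/2 \<and> X \<le> D*b) \<or> (X - D*c < -1/2 \<and> X \<ge> D*b)"

lemma inv_step:
  assumes c: "0 < c" "c < 1" and b: "0 \<le> b" "b \<le> 1"
    and X': "X' = X \<or> X' = X - 1"
    and cl: "\<bar>X' - (D-1)*c\<bar> \<le> \<bar>X - (D-1)*c\<bar>" "\<bar>X' - (D-1)*c\<bar> \<le> \<bar>X - 1 - (D-1)*c\<bar>"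
    and I: "InvR b c X D"
  shows "InvR b c X' (D-1)"
proof -
  have t: "(D-1)*c = D*c - c" by (simp add: algebra_simps)
  have db: "(D-1)*b = D*b - b" by (simp add: algebra_simps)
  from X' show ?thesis
  proof
    assume x: "X' = X"
    show ?thesis using x cl I c b unfolding InvR_def t db by (auto simp: abs_if split: if_splits)
  next
    assume x: "X' = X - 1"
    show ?thesis using x cl I c b unfolding InvR_def t db by (auto simp: abs_if split: if_splits)
  qed
qed

lemma inv_zone:
  assumes K: "K > 0" "D > K" and b: "j \<le> K*b" "K*b < j+1" and c: "c = (2*j+1)/(2*K)"
    and I: "InvR b c X D"
  shows "D*j \<le> X*K \<and> X*K < D*(j+1)"
proof -
  define e where "e = X - D*c"
  have id: "X*K = D*j + D/2 + K*e" unfolding e_def c using K by (simp add: field_simps)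
  have Dp: "D > 0" using K by simp
  show ?thesis
  proof (cases "\<bar>e\<bar> \<le> 1/2")
    case True
    then have "\<bar>K*e\<bar> \<le> K/2" using K by (simp add: abs_mult)
    then have "-(K/2) \<le> K*e" "K*e \<le> K/2" by (simp_all add: abs_le_iff)
    moreover have "D*(j+1) = D*j + D" by (simp add: algebra_simps)
    ultimately show ?thesis using id K by linarith
  next
    case False
    then have "(e > 1/2 \<and> X \<le> D*b) \<or> (e < -1/2 \<and> X \<ge> D*b)" using I unfolding InvR_def e_def by auto
    then show ?thesis
    proof
      assume h: "e > 1/2 \<and> X \<le> D*b"
      have "K*e > 0" using h K by simp
      moreover have "X*K \<le> D*(K*b)" using h K by (simp add: mult_right_mono mult.assoc mult.commute)
      moreover have "D*(K*b) < D*(j+1)" using b Dp by simp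
      ultimately show ?thesis using id Dp by linarith
    next
      assume h: "e < -1/2 \<and> X \<ge> D*b"
      have "K*e < 0" using h K by (simp add: mult_pos_neg)
      moreover have "X*K \<ge> D*(K*b)" using h K by (simp add: mult_right_mono mult.assoc mult.commute)
      moreover have "D*(K*b) \<ge> D*j" using b Dp by simp
      moreover have "D*(j+1) = D*j + D" by (simp add: algebra_simps)
      ultimately show ?thesis using id Dp by linarith
    qed
  qed
qed

lemma inv_base:
  assumes K: "K > 0" and j: "1 \<le> j" "2*j+1 < 2*K" "j+1 \<le> K" and b: "j \<le> K*b" "K*b < j+1" and c: "c = (2*j+1)/(2*K)"
    and I: "InvR b c X (K+1)"
  shows "j < X \<and> X < j+2"
proof -
  define f where "f = (2*j+1)/(2*K)"
  have f: "0 < f" "f < 1" unfolding f_def using K j by (auto simp: field_simps)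
  have id: "(K+1)*c = j + 1/2 + f" unfolding c f_def using K by (simp add: field_simps)
  have bK: "(K+1)*b = K*b + b" by (simp add: algebra_simps)
  have "K*b > 0" using b j by linarith
  then have b0: "b > 0" using K by (simp add: zero_less_mult_iff)
  have b1: "b < 1"
  proof -
    have "K*b < K*1" using b j by linarith
    then show ?thesis using K by simp
  qed
  show ?thesis using I b b0 b1 f unfolding InvR_def id bK abs_le_iff by (elim disjE conjE; linarith)
qed

lemma inv_compat:
  assumes K: "K > 0" "K < D" "D < 2*K" and ca: "\<bar>c - a\<bar> \<le> 1/(2*K)"
    and I: "InvR b c X D" and ba: "b = a \<or> b = c"
  shows "\<bar>X - D*a\<bar> < 3/2"
proof -
  have "D*\<bar>c - a\<bar> \<le> D*(1/(2*K))" using ca K by (intro mult_left_mono) auto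
  moreover have "D*(1/(2*K)) < 1" using K by (simp add: field_simps)
  moreover have "\<bar>D*c - D*a\<bar> = D*\<bar>c - a\<bar>"
  proof -
    have "D*c - D*a = D*(c-a)" by (simp add: algebra_simps)
    then show ?thesis using K by (simp add: abs_mult)
  qed
  ultimately have d: "\<bar>D*c - D*a\<bar> < 1" by linarith
  show ?thesis using I ba d unfolding InvR_def abs_le_iff abs_less_iff by (elim disjE conjE; simp; linarith)
qed



definition InvW :: "real \<Rightarrow> real \<Rightarrow> pt \<Rightarrow> bool" where
  "InvW b c w \<longleftrightarrow> InvR b c (real_of_int (fst w)) (real_of_int (diag w))"

lemma K4: "i \<ge> 2 \<Longrightarrow> (4::int) \<le> 2^i"
proof -
  assume "i \<ge> 2"
  then have "(2::int)^2 \<le> 2^i" by (intro power_increasing) auto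
  then show ?thesis by simp
qed

lemma step_inv:
  fixes i :: nat and j :: int and b c :: real
  assumes valid: "valid_parent par" and i2: "i \<ge> 2" and j1: "1 \<le> j" and jK: "j \<le> 2^i - 2"
    and b: "real_of_int j \<le> 2^i * b" "2^i * b < real_of_int j + 1"
    and c: "c = (2 * real_of_int j + 1) / 2^(i+1)"
    and d: "2^i + 1 < diag w" "diag w \<le> 2*2^i" and I: "InvW b c w"
  shows "diag (par w) = diag w - 1 \<and> InvW b c (par w)"
proof -
  obtain x y where w: "w = (x,y)" by (cases w)
  define K :: int where "K = 2^i"
  have Kr: "real_of_int K = 2^i" unfolding K_def by simp
  have K4': "K \<ge> 4" unfolding K_def using K4 i2 by simp
  have c': "c = (2*real_of_int j+1)/(2*real_of_int K)" unfolding c Kr by simp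
  have b0: "0 \<le> b" "b \<le> 1"
  proof -
    have "real_of_int K * b \<ge> 0" using b j1 Kr by simp
    then show "0 \<le> b" using K4' by (simp add: zero_le_mult_iff)
    have "real_of_int j \<le> real_of_int (K - 2)" using jK unfolding K_def by (simp only: of_int_le_iff)
    then have "real_of_int j \<le> 2^i - 2" unfolding K_def by simp
    then have "2^i * b < 2^i * (1::real)" using b by linarith
    then show "b \<le> 1" by simp
  qed
  have jr0: "real_of_int j \<le> real_of_int (K - 2)" "real_of_int 4 \<le> real_of_int K" "real_of_int 1 \<le> real_of_int j"
    using jK K4' j1 unfolding K_def by (simp_all only: of_int_le_iff)
  have jr: "1 \<le> real_of_int j" "real_of_int j \<le> real_of_int K - 2" "4 \<le> real_of_int K"
    using jr0 by simp_all
  have c01: "0 < c" "c < 1" unfolding c' using jr by (auto simp: field_simps)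
  have IR: "InvR b c (real_of_int x) (real_of_int (x+y))" using I w unfolding InvW_def diag_def by simp
  have z: "real_of_int (x+y) * real_of_int j \<le> real_of_int x * real_of_int K \<and>
           real_of_int x * real_of_int K < real_of_int (x+y) * (real_of_int j + 1)"
  proof (rule inv_zone[OF _ _ _ _ c' IR])
    have dxy: "K + 1 < x + y" using d w unfolding K_def diag_def by auto
    have "real_of_int (K+1) < real_of_int (x+y)" using dxy by (simp only: of_int_less_iff)
    then show "real_of_int K < real_of_int (x+y)" by simp
    show "0 < real_of_int K" using jr by simp
    show "real_of_int j \<le> real_of_int K * b" "real_of_int K * b < real_of_int j + 1" using b unfolding Kr by auto
  qed
  have z1: "(x+y)*j \<le> x*2^i" using z unfolding K_def by (metis of_int_le_iff of_int_mult)
  have z2: "x*2^i < (x+y)*(j+1)" using z unfolding K_def by (metis of_int_less_iff of_int_mult of_int_add of_int_1)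
  have d': "2^i + 1 < x + y" "x + y \<le> 2*2^i" using d w unfolding diag_def by auto
  note zs = zone_step[OF valid i2 j1 jK d' z1 z2]
  have "par (x,y) = (x, x+y-1-x) \<or> par (x,y) = (x-1, x+y-1-(x-1))" using conjunct1[OF zs] by auto
  then obtain x' where x': "par (x,y) = (x', x+y-1-x')" "x' = x \<or> x' = x - 1" by blast
  have cl: "\<bar>real_of_int x' - (real_of_int (x+y) - 1) * c\<bar> \<le> \<bar>real_of_int x - (real_of_int (x+y) - 1) * c\<bar>"
           "\<bar>real_of_int x' - (real_of_int (x+y) - 1) * c\<bar> \<le> \<bar>real_of_int x - 1 - (real_of_int (x+y) - 1) * c\<bar>"
    using zs x' unfolding c by auto
  have "InvR b c (real_of_int x') (real_of_int (x+y) - 1)"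
    by (rule inv_step[OF c01 b0 _ cl IR]) (use x' in auto)
  moreover have "real_of_int (x+y) - 1 = real_of_int (x' + (x+y-1-x'))" by simp
  ultimately show ?thesis using w x' unfolding InvW_def diag_def by (simp only: fst_conv snd_conv) simp
qed



lemma track:
  fixes i :: nat and j :: int and a b c :: real
  assumes valid: "valid_parent par" and i2: "i \<ge> 2" and j1: "1 \<le> j" and jK: "j \<le> 2^i - 2"
    and b: "real_of_int j \<le> 2^i * b" "2^i * b < real_of_int j + 1"
    and c: "c = (2 * real_of_int j + 1) / 2^(i+1)"
    and a: "real_of_int j \<le> 2^i * a" "2^i * a \<le> real_of_int j + 1"
    and skel: "\<And>w. diag w = 2^i \<Longrightarrow> odd (fst w) \<Longrightarrow> 0 < fst w \<Longrightarrow> fst w < 2^i \<Longrightarrow> \<bar>Er a w\<bar> \<le> 1 \<Longrightarrow> chainok par a w"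
    and compat: "\<And>w. 2^i < diag w \<Longrightarrow> diag w < 2*2^i \<Longrightarrow> InvW b c w \<Longrightarrow> \<bar>Er a w\<bar> < 3/2"
  shows "2^i < diag w \<Longrightarrow> diag w \<le> 2*2^i \<Longrightarrow> InvW b c w \<Longrightarrow> \<bar>Er a w\<bar> < 3/2 \<Longrightarrow> chainok par a w"
proof -
  define K :: int where "K = 2^i"
  have Kr: "real_of_int K = 2^i" unfolding K_def by simp
  have K4': "K \<ge> 4" unfolding K_def using K4 i2 by simp
  have jr0: "real_of_int j \<le> real_of_int (K - 2)" "real_of_int 4 \<le> real_of_int K" "real_of_int 1 \<le> real_of_int j"
    using jK K4' j1 unfolding K_def by (simp_all only: of_int_le_iff)
  have jr: "1 \<le> real_of_int j" "real_of_int j \<le> real_of_int K - 2" "4 \<le> real_of_int K"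
    using jr0 by simp_all
  have c': "c = (2*real_of_int j+1)/(2*real_of_int K)" unfolding c Kr by simp
  have claim: "\<forall>w. diag w = K + 1 + int n \<longrightarrow> diag w < 2*K \<longrightarrow> InvW b c w \<longrightarrow> chainok par a w" for n
  proof (induction n)
    case 0
    show ?case
    proof (intro allI impI)
      fix w assume w1: "diag w = K + 1 + int 0" and w2: "diag w < 2*K" and I: "InvW b c w"
      obtain x y where w: "w = (x,y)" by (cases w)
      have xy: "x + y = K + 1" using w1 w unfolding diag_def by simp
      have "real_of_int (x + y) = real_of_int K + 1" using xy by simp
      then have IR: "InvR b c (real_of_int x) (real_of_int K + 1)" using I w unfolding InvW_def diag_def by simp
      have "real_of_int j < real_of_int x \<and> real_of_int x < real_of_int j + 2"
        by (rule inv_base[OF _ _ _ _ _ _ c' IR]) (use jr b Kr in auto)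
      then have "j < x" "x < j + 2" by linarith+
      then have x: "x = j + 1" by simp
      have y: "y = K - j" using xy x by simp
      have x2: "fst w \<ge> 2" "snd w \<ge> 2" using x y w j1 jK unfolding K_def by auto
      have n3: "\<not> (snd w = 2 \<and> is_pow2 (diag w))"
        using pow2_succ[of i] i2 w1 unfolding K_def by auto
      have p4: "is_pow2 (diag w - 1)" using w1 pow2_self[of i] unfolding K_def by simp
      have po: "parent_ok w (par w)" using valid x2 unfolding valid_parent_def Q1_def orig_def by auto
      note P = po4[OF po x2 n3 p4]
      have q: "par w = (j+1, K-j-1) \<or> par w = (j, K-j)" using P x y w unfolding down_of_def left_of_def by auto
      have dq: "diag (par w) = K" using q unfolding diag_def by auto
      have oq: "odd (fst (par w))" using P by simp
      have fq: "0 < fst (par w)" "fst (par w) < K" using q j1 jK unfolding K_def by auto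
      have "\<bar>Er a (par w)\<bar> \<le> 1"
      proof -
        have "Er a (par w) = real_of_int (fst (par w)) - 2^i * a" unfolding Er_def dq Kr by simp
        moreover have "real_of_int (fst (par w)) = real_of_int j + 1 \<or> real_of_int (fst (par w)) = real_of_int j"
          using q by auto
        ultimately show ?thesis using a by auto
      qed
      then have cq: "chainok par a (par w)" using skel[of "par w"] dq oq fq unfolding K_def by auto
      have "\<bar>Er a w\<bar> < 3/2" using compat[of w] w1 w2 I K4' unfolding K_def by auto
      then show "chainok par a w" using chainok_step[OF _ cq] dq w1 K4' by auto
    qed
  next
    case (Suc n)
    show ?case
    proof (intro allI impI)
      fix w assume w1: "diag w = K + 1 + int (Suc n)" and w2: "diag w < 2*K" and I: "InvW b c w"
      have st: "diag (par w) = diag w - 1 \<and> InvW b c (par w)"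
        by (rule step_inv[OF valid i2 j1 jK b c]) (use w1 w2 I in \<open>auto simp: K_def\<close>)
      have "diag (par w) = K + 1 + int n" "diag (par w) < 2*K" using st w1 w2 by auto
      then have cq: "chainok par a (par w)" using Suc.IH st by blast
      have "\<bar>Er a w\<bar> < 3/2" using compat[of w] w1 w2 I K4' unfolding K_def by auto
      then show "chainok par a w" using chainok_step[OF _ cq] st w1 K4' by auto
    qed
  qed
  assume d1: "2^i < diag w" and d2: "diag w \<le> 2*2^i" and I: "InvW b c w" and E: "\<bar>Er a w\<bar> < 3/2"
  show "chainok par a w"
  proof (cases "diag w < 2*K")
    case True
    have "diag w = K + 1 + int (nat (diag w - K - 1))" using d1 unfolding K_def by simp
    then show ?thesis using claim[of "nat (diag w - K - 1)"] True I by blast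
  next
    case False
    then have dw: "diag w = 2*K" using d2 unfolding K_def by simp
    have st: "diag (par w) = diag w - 1 \<and> InvW b c (par w)"
      by (rule step_inv[OF valid i2 j1 jK b c]) (use dw I K4' in \<open>auto simp: K_def\<close>)
    moreover have "diag (par w) = K + 1 + int (nat (K - 2))" "diag (par w) < 2*K" using st dw K4' by auto
    ultimately have "chainok par a (par w)" using claim[of "nat (K - 2)"] by blast
    then show ?thesis using chainok_step[OF E] st dw K4' by auto
  qed
qed



lemma par_10: "valid_parent par \<Longrightarrow> par (1,0) = (0,0)"
proof -
  assume v: "valid_parent par"
  have "parent_ok (1,0) (par (1,0))" using v unfolding valid_parent_def Q1_def orig_def by auto
  then show ?thesis using po2[of "(1,0)"] unfolding left_of_def by auto
qed

lemma par_col: "valid_parent par \<Longrightarrow> x0 = 0 \<or> x0 = 1 \<Longrightarrow> y \<ge> 1 \<Longrightarrow> par (x0,y) = (x0, y-1)"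
proof -
  assume v: "valid_parent par" and x0: "x0 = 0 \<or> x0 = 1" and y: "y \<ge> 1"
  have po: "parent_ok (x0,y) (par (x0,y))" using v x0 y unfolding valid_parent_def Q1_def orig_def by auto
  have "par (x0,y) = down_of (x0,y)" by (rule po1[OF po]) (use x0 y in auto)
  then show ?thesis unfolding down_of_def by simp
qed

lemma par_row: "valid_parent par \<Longrightarrow> y0 = 0 \<or> y0 = 1 \<Longrightarrow> x \<ge> 2 \<Longrightarrow> par (x,y0) = (x-1, y0)"
proof -
  assume v: "valid_parent par" and y0: "y0 = 0 \<or> y0 = 1" and x: "x \<ge> 2"
  have po: "parent_ok (x,y0) (par (x,y0))" using v y0 x unfolding valid_parent_def Q1_def orig_def by auto
  have "par (x,y0) = left_of (x,y0)" by (rule po2[OF po]) (use x y0 in auto)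
  then show ?thesis unfolding left_of_def by simp
qed

lemma col:
  assumes v: "valid_parent par" and x0: "x0 = 0 \<or> x0 = 1"
    and h: "\<And>y'. 0 \<le> y' \<Longrightarrow> y' \<le> y \<Longrightarrow> \<bar>Er a (x0, y')\<bar> < 3/2" and y: "y \<ge> 0"
  shows "chainok par a (x0, y)"
proof -
  have "\<forall>y. y = int n \<longrightarrow> (\<forall>y'. 0 \<le> y' \<longrightarrow> y' \<le> y \<longrightarrow> \<bar>Er a (x0, y')\<bar> < 3/2) \<longrightarrow> chainok par a (x0, y)" for n
  proof (induction n)
    case 0
    show ?case
    proof (intro allI impI)
      fix y assume y0: "y = int 0" and hh: "\<forall>y'. 0 \<le> y' \<longrightarrow> y' \<le> y \<longrightarrow> \<bar>Er a (x0, y')\<bar> < 3/2"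
      show "chainok par a (x0, y)"
      proof (cases "x0 = 0")
        case True then show ?thesis using y0 chainok_orig unfolding orig_def by simp
      next
        case False
        then have "x0 = 1" using x0 by simp
        moreover have "chainok par a (par (1,0))" using par_10[OF v] chainok_orig unfolding orig_def by simp
        ultimately show ?thesis using chainok_step[of a "(1,0)" par] hh y0 par_10[OF v] unfolding diag_def by simp
      qed
    qed
  next
    case (Suc n)
    show ?case
    proof (intro allI impI)
      fix y assume y0: "y = int (Suc n)" and hh: "\<forall>y'. 0 \<le> y' \<longrightarrow> y' \<le> y \<longrightarrow> \<bar>Er a (x0, y')\<bar> < 3/2"
      have pc: "par (x0,y) = (x0, int n)" using par_col[OF v x0, of y] y0 by simp
      have "chainok par a (x0, int n)" using Suc.IH hh y0 by auto
      then show "chainok par a (x0, y)" using chainok_step[of a "(x0,y)" par] hh y0 pc x0 unfolding diag_def by auto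
    qed
  qed
  then show ?thesis using h y by (metis nonneg_eq_int)
qed

lemma row1:
  assumes v: "valid_parent par"
    and h: "\<And>x'. 1 \<le> x' \<Longrightarrow> x' \<le> x \<Longrightarrow> \<bar>Er a (x', 1)\<bar> < 3/2" and h0: "\<bar>Er a (1, 0)\<bar> < 3/2" and x: "x \<ge> 1"
  shows "chainok par a (x, 1)"
proof -
  have "\<forall>x. x = 1 + int n \<longrightarrow> (\<forall>x'. 1 \<le> x' \<longrightarrow> x' \<le> x \<longrightarrow> \<bar>Er a (x', 1)\<bar> < 3/2) \<longrightarrow> chainok par a (x, 1)" for n
  proof (induction n)
    case 0
    show ?case
    proof (intro allI impI)
      fix x assume x0: "x = 1 + int 0" and hh: "\<forall>x'. 1 \<le> x' \<longrightarrow> x' \<le> x \<longrightarrow> \<bar>Er a (x', 1)\<bar> < 3/2"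
      have c10: "chainok par a (1, 0)" using col[OF v, of 1 0 a] h0 by auto
      have "par (1,1) = (1,0)" using par_col[OF v, of 1 1] by simp
      then show "chainok par a (x, 1)" using chainok_step[of a "(1,1)" par, OF _ ] c10 hh x0 unfolding diag_def by auto
    qed
  next
    case (Suc n)
    show ?case
    proof (intro allI impI)
      fix x assume x0: "x = 1 + int (Suc n)" and hh: "\<forall>x'. 1 \<le> x' \<longrightarrow> x' \<le> x \<longrightarrow> \<bar>Er a (x', 1)\<bar> < 3/2"
      have pc: "par (x,1) = (1 + int n, 1)" using par_row[OF v, of 1 x] x0 by simp
      have "chainok par a (1 + int n, 1)" using Suc.IH hh x0 by auto
      then show "chainok par a (x, 1)" using chainok_step[of a "(x,1)" par] hh x0 pc unfolding diag_def by auto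
    qed
  qed
  then show ?thesis using h x by (metis add.commute le_add_diff_inverse2 nonneg_eq_int diff_ge_0_iff_ge)
qed

lemma row0:
  assumes v: "valid_parent par"
    and h: "\<And>x'. 0 \<le> x' \<Longrightarrow> x' \<le> x \<Longrightarrow> \<bar>Er a (x', 0)\<bar> < 3/2" and x: "x \<ge> 0"
  shows "chainok par a (x, 0)"
proof -
  have "\<forall>x. x = int n \<longrightarrow> (\<forall>x'. 0 \<le> x' \<longrightarrow> x' \<le> x \<longrightarrow> \<bar>Er a (x', 0)\<bar> < 3/2) \<longrightarrow> chainok par a (x, 0)" for n
  proof (induction n)
    case 0
    show ?case using chainok_orig unfolding orig_def by simp
  next
    case (Suc n)
    show ?case
    proof (intro allI impI)
      fix x assume x0: "x = int (Suc n)" and hh: "\<forall>x'. 0 \<le> x' \<longrightarrow> x' \<le> x \<longrightarrow> \<bar>Er a (x', 0)\<bar> < 3/2"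
      have pc: "par (x,0) = (int n, 0)"
      proof (cases n)
        case 0 then show ?thesis using par_10[OF v] x0 by simp
      next
        case (Suc m) then show ?thesis using par_row[OF v, of 0 x] x0 by simp
      qed
      have "chainok par a (int n, 0)" using Suc.IH hh x0 by auto
      then show "chainok par a (x, 0)" using chainok_step[of a "(x,0)" par] hh x0 pc unfolding diag_def by auto
    qed
  qed
  then show ?thesis using h x by (metis nonneg_eq_int)
qed



lemma Er_eq: "Er a (x,y) = real_of_int x - (real_of_int x + real_of_int y) * a"
  unfolding Er_def diag_def by simp

lemma skel_edge1:
  assumes v: "valid_parent par" and m: "m \<ge> 1" and E: "\<bar>1 - 2^m * a\<bar> \<le> (1::real)"
  shows "chainok par a (1, 2^m - 1)"
proof (rule col[OF v])
  have a0: "a \<ge> 0" using E by (smt (verit) zero_less_power mult_pos_neg)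
  fix y' :: int assume y: "0 \<le> y'" "y' \<le> 2^m - 1"
  have "real_of_int (1 + y') \<le> real_of_int ((2::int)^m)" using y by (simp only: of_int_le_iff)
  then have "1 + real_of_int y' \<le> 2^m" by simp
  then have "(1 + real_of_int y') * a \<le> 2^m * a" using a0 by (rule mult_right_mono)
  moreover have "(1 + real_of_int y') * a \<ge> 0" using a0 y by simp
  moreover have "Er a (1,y') = 1 - (1 + real_of_int y')*a" unfolding Er_eq by simp
  ultimately show "\<bar>Er a (1, y')\<bar> < 3/2" using E[unfolded abs_le_iff] unfolding abs_less_iff by linarith
qed (use m in auto)

lemma skel_edge2:
  assumes v: "valid_parent par" and m: "m \<ge> 1" and E: "\<bar>2^m - 1 - 2^m * a\<bar> \<le> (1::real)"
  shows "chainok par a (2^m - 1, 1)"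
proof -
  define g where "g = 1 - a"
  have Eg: "0 \<le> 2^m * g" "2^m * g \<le> 2" using E[unfolded abs_le_iff] unfolding g_def by (simp_all add: algebra_simps)
  have "(0::real) < 2^m" by simp
  have g0: "g \<ge> 0"
  proof (rule ccontr)
    assume "\<not> g \<ge> 0"
    then have "2^m * g < 0" using \<open>(0::real) < 2^m\<close> by (simp add: mult_pos_neg)
    then show False using Eg(1) by simp
  qed
  have m2: "(2::real) \<le> 2^m" using m by (metis power_increasing one_le_numeral power_one_right)
  show ?thesis
  proof (rule row1[OF v])
    fix x' :: int assume x: "1 \<le> x'" "x' \<le> 2^m - 1"
    have "real_of_int (x' + 1) \<le> real_of_int ((2::int)^m)" using x by (simp only: of_int_le_iff)
    then have "real_of_int x' + 1 \<le> 2^m" by simp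
    then have "(real_of_int x' + 1) * g \<le> 2^m * g" using g0 by (rule mult_right_mono)
    moreover have "(real_of_int x' + 1) * g \<ge> 0" using g0 x by simp
    moreover have "Er a (x',1) = (real_of_int x' + 1) * g - 1" unfolding Er_eq g_def by (simp add: algebra_simps)
    ultimately show "\<bar>Er a (x', 1)\<bar> < 3/2" using Eg unfolding abs_less_iff by linarith
  next
    have "2 * g \<le> 2^m * g" using m2 g0 by (rule mult_right_mono)
    moreover have "Er a (1,0) = g" unfolding Er_eq g_def by simp
    ultimately show "\<bar>Er a (1, 0)\<bar> < 3/2" using Eg g0 by simp
  next
    show "1 \<le> (2::int)^m - 1" using m by (metis diff_ge_0_iff_ge le_diff_eq one_add_one one_le_power one_le_numeral power_increasing power_one_right)
  qed
qed



lemma skel: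
  assumes v: "valid_parent par"
  shows "\<forall>w a. diag w = 2^m \<longrightarrow> odd (fst w) \<longrightarrow> 0 < fst w \<longrightarrow> fst w < 2^m \<longrightarrow> \<bar>Er a w\<bar> \<le> 1 \<longrightarrow> chainok par a w"
proof (induction m rule: less_induct)
  case (less m)
  show ?case
  proof (intro allI impI)
    fix w and a :: real
    assume d: "diag w = 2^m" and od: "odd (fst w)" and x0: "0 < fst w" and xm: "fst w < 2^m" and E: "\<bar>Er a w\<bar> \<le> 1"
    obtain x y where w: "w = (x,y)" by (cases w)
    have y: "y = 2^m - x" using d w unfolding diag_def by simp
    have Ew: "Er a w = real_of_int x - 2^m * a"
    proof -
      have "real_of_int (diag w) = 2^m" using d by simp
      then show ?thesis unfolding Er_def w by simp
    qed
    have m1: "m \<ge> 1" using x0 xm w by (cases m) auto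
    consider (e1) "x = 1" | (e2) "x = 2^m - 1" | (g) "x \<noteq> 1" "x \<noteq> 2^m - 1" by blast
    then show "chainok par a w"
    proof cases
      case e1
      then show ?thesis using skel_edge1[OF v m1, of a] E Ew w y by simp
    next
      case e2
      have "real_of_int x = 2^m - 1" using e2 by simp
      then show ?thesis using skel_edge2[OF v m1, of a] E Ew w y e2 by simp
    next
      case g
      have ox: "odd x" "0 < x" "x < 2^m" using od x0 xm w by auto
      have x3: "x \<ge> 3" using g(1) ox by presburger
      have evm: "even ((2::int)^m)" using m1 by simp
      obtain M where M: "M = (2::int)^m" by simp
      have "x \<le> M - 3" using g(2) ox evm unfolding M[symmetric] by presburger
      then have x3': "x \<le> 2^m - 3" using M by simp
      have m3: "m \<ge> 3"
      proof (rule ccontr)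
        assume "\<not> m \<ge> 3"
        then have "(2::int)^m \<le> 2^2" by (intro power_increasing) auto
        then show False using x3 x3' by simp
      qed
      obtain i where mi: "m = Suc i" using m1 by (cases m) auto
      have i2: "i \<ge> 2" using m3 mi by simp
      have pm: "(2::int)^m = 2 * 2^i" using mi by simp
      have pmr: "(2::real)^m = 2 * 2^i" using mi by simp
      obtain k where xk: "x = 2*k + 1" using od w by (metis fst_conv oddE)
      have k1: "1 \<le> k" "k \<le> 2^i - 2" using x3 x3' xk pm by auto
      define c :: real where "c = (2 * real_of_int k + 1) / 2^(i+1)"
      have Kc: "2^i * c = real_of_int k + 1/2" unfolding c_def by (simp add: field_simps)
      have Ea: "\<bar>2 * real_of_int k + 1 - 2 * 2^i * a\<bar> \<le> 1" using E Ew xk pmr by simp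
      have ak: "real_of_int k \<le> 2^i * a" "2^i * a \<le> real_of_int k + 1" using Ea unfolding abs_le_iff by linarith+
      have ca: "\<bar>c - a\<bar> \<le> 1/(2*2^i)"
      proof -
        have "c - a = (2 * real_of_int k + 1 - 2 * 2^i * a) / (2 * 2^i)" unfolding c_def by (simp add: field_simps)
        then have "\<bar>c - a\<bar> = \<bar>2 * real_of_int k + 1 - 2 * 2^i * a\<bar> / (2 * 2^i)" by simp
        then show ?thesis using Ea by (simp add: divide_right_mono)
      qed
      have tr: "2^i < diag w \<Longrightarrow> diag w \<le> 2*2^i \<Longrightarrow> InvW c c w \<Longrightarrow> \<bar>Er a w\<bar> < 3/2 \<Longrightarrow> chainok par a w"
      proof (rule track[OF v i2 k1(1) k1(2) _ _ c_def ak])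
        show "real_of_int k \<le> 2^i * c" "2^i * c < real_of_int k + 1" using Kc by auto
        show "chainok par a u" if "diag u = 2^i" "odd (fst u)" "0 < fst u" "fst u < 2^i" "\<bar>Er a u\<bar> \<le> 1" for u
        proof -
          have "i < m" using mi by simp
          from less.IH[OF this] show ?thesis using that by blast
        qed
        show "\<bar>Er a u\<bar> < 3/2" if u: "2^i < diag u" "diag u < 2*2^i" "InvW c c u" for u
        proof -
          have "real_of_int ((2::int)^i) < real_of_int (diag u)" "real_of_int (diag u) < real_of_int (2*(2::int)^i)"
            using u(1,2) by (simp_all only: of_int_less_iff)
          then have r: "2^i < real_of_int (diag u)" "real_of_int (diag u) < 2*2^i" by simp_all
          have "\<bar>real_of_int (fst u) - real_of_int (diag u) * a\<bar> < 3/2"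
            by (rule inv_compat[of "2^i"]) (use r ca u(3) in \<open>auto simp: InvW_def\<close>)
          then show ?thesis unfolding Er_def .
        qed
      qed
      have "InvW c c w"
      proof -
        have "real_of_int x - 2^m * c = 0" unfolding xk c_def pmr by (simp add: field_simps)
        then show ?thesis unfolding InvW_def InvR_def using d w by simp
      qed
      then show ?thesis using tr d pm E by auto
    qed
  qed
qed



lemma Er_self: "diag p > 0 \<Longrightarrow> Er (real_of_int (fst p) / real_of_int (diag p)) p = 0"
  unfolding Er_def by simp

lemma skel':
  "valid_parent par \<Longrightarrow> diag w = 2^m \<Longrightarrow> odd (fst w) \<Longrightarrow> 0 < fst w \<Longrightarrow> fst w < 2^m \<Longrightarrow> \<bar>Er a w\<bar> \<le> 1 \<Longrightarrow> chainok par a w"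
  using skel by blast

lemma frac_bound:
  fixes u v :: real
  assumes "v > 0" "-v < u" "u < v" shows "\<bar>u / v\<bar> < 3/2"
proof -
  have "\<bar>u\<bar> < v" using assms by auto
  then have "\<bar>u\<bar> / v < 1" using assms(1) by simp
  moreover have "\<bar>u / v\<bar> = \<bar>u\<bar> / v" using assms(1) by (simp add: abs_divide)
  ultimately show ?thesis by linarith
qed

lemma main_chain:
  assumes v: "valid_parent par" and p: "p \<in> Q1" "p \<noteq> orig"
  shows "chainok par (real_of_int (fst p) / real_of_int (diag p)) p"
proof -
  obtain x y where pxy: "p = (x,y)" by (cases p)
  define n where "n = x + y"
  define a where "a = real_of_int x / real_of_int n"
  have xy0: "x \<ge> 0" "y \<ge> 0" "n > 0" using p pxy unfolding Q1_def orig_def n_def by auto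
  have nr: "real_of_int n > 0" using xy0 by simp
  have an: "real_of_int n * a = real_of_int x" unfolding a_def using nr by simp
  have E0: "Er a p = 0" unfolding Er_def pxy diag_def using an n_def by simp
  have goal: "chainok par a (x,y)"
  proof (cases "x \<le> 1 \<and> (x,y) \<noteq> (1,0)")
    case A: True
    then have x01: "x = 0 \<or> x = 1" using xy0 by auto
    show ?thesis
    proof (rule col[OF v x01 _ xy0(2)])
      fix y' assume y': "0 \<le> y'" "y' \<le> y"
      show "\<bar>Er a (x, y')\<bar> < 3/2"
      proof (cases "x = 0")
        case True then show ?thesis unfolding Er_eq a_def by simp
      next
        case False
        then have x1: "x = 1" using x01 by simp
        have "Er a (x, y') = 1 - (1 + real_of_int y') / (1 + real_of_int y)"
          unfolding Er_eq a_def n_def x1 by simp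
        moreover have "(1 + real_of_int y') / (1 + real_of_int y) \<le> 1" using y' by simp
        moreover have "(1 + real_of_int y') / (1 + real_of_int y) \<ge> 0" using y' xy0 by simp
        ultimately show ?thesis unfolding abs_less_iff by linarith
      qed
    qed
  next
    case nA: False
    show ?thesis
    proof (cases "y \<le> 1")
      case True
      show ?thesis
      proof (cases "y = 0")
        case y0: True
        then have "x > 0" using xy0 n_def by simp
        then have a1: "a = 1" unfolding a_def n_def using y0 by simp
        have "chainok par a (x,0)" by (rule row0[OF v _ xy0(1)]) (simp add: Er_eq a1)
        then show ?thesis using y0 by simp
      next
        case False
        then have y1: "y = 1" using True xy0 by simp
        then have x1: "x \<ge> 1" using nA by auto
        have ar: "a = real_of_int x / (real_of_int x + 1)" unfolding a_def n_def y1 by simp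
        have xp: "real_of_int x + 1 > 0" using xy0 by simp
        show ?thesis unfolding y1
        proof (rule row1[OF v _ _ x1])
          fix x' assume x': "1 \<le> x'" "x' \<le> x"
          have eq: "Er a (x', 1) = (real_of_int x' - real_of_int x) / (real_of_int x + 1)"
            unfolding Er_eq ar using xp by (simp add: field_simps)
          have "\<bar>(real_of_int x' - real_of_int x) / (real_of_int x + 1)\<bar> < 3/2"
            by (rule frac_bound) (use x' xp in auto)
          then show "\<bar>Er a (x', 1)\<bar> < 3/2" unfolding eq .
        next
          have eq: "Er a (1, 0) = 1 / (real_of_int x + 1)" unfolding Er_eq ar using xp by (simp add: field_simps)
          have "\<bar>1 / (real_of_int x + 1)\<bar> < 3/2" by (rule frac_bound) (use x1 xp in auto)
          then show "\<bar>Er a (1, 0)\<bar> < 3/2" unfolding eq .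
        qed
      qed
    next
      case nB: False
      have x2: "x \<ge> 2" "y \<ge> 2" using nA nB by auto
      have po: "parent_ok (x,y) (par (x,y))" using v p pxy unfolding valid_parent_def by auto
      show ?thesis
      proof (cases "y = 2 \<and> is_pow2 n")
        case C3: True
        have pp: "par (x,y) = (x,1)" using po3[OF po] x2 C3 unfolding n_def diag_def down_of_def by auto
        have ar: "a = real_of_int x / (real_of_int x + 2)" unfolding a_def n_def using C3 by simp
        have xp: "real_of_int x + 2 > 0" using xy0 by simp
        have "chainok par a (x,1)"
        proof (rule row1[OF v])
          fix x' assume x': "1 \<le> x'" "x' \<le> x"
          have eq: "Er a (x', 1) = (2 * real_of_int x' - real_of_int x) / (real_of_int x + 2)"
            unfolding Er_eq ar using xp by (simp add: field_simps)
          have "\<bar>(2 * real_of_int x' - real_of_int x) / (real_of_int x + 2)\<bar> < 3/2"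
            by (rule frac_bound) (use x' xp in auto)
          then show "\<bar>Er a (x', 1)\<bar> < 3/2" unfolding eq .
        next
          have eq: "Er a (1, 0) = 2 / (real_of_int x + 2)" unfolding Er_eq ar using xp by (simp add: field_simps)
          have "\<bar>2 / (real_of_int x + 2)\<bar> < 3/2" by (rule frac_bound) (use x2 xp in auto)
          then show "\<bar>Er a (1, 0)\<bar> < 3/2" unfolding eq .
        qed (use x2 in auto)
        then show ?thesis using chainok_step[of a "(x,y)" par] E0 pxy pp x2 C3 unfolding diag_def by auto
      next
        case n3: False
        have n3': "\<not> (snd (x,y) = 2 \<and> is_pow2 (diag (x,y)))" using n3 unfolding n_def diag_def by simp
        show ?thesis
        proof (cases "is_pow2 (n - 1)")
          case C4: True
          then obtain r :: nat where r: "n - 1 = 2^r" unfolding is_pow2_def by auto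
          have P: "par (x,y) \<in> {down_of (x,y), left_of (x,y)} \<and> odd (fst (par (x,y)))"
            using po4[OF po] x2 n3' C4 unfolding n_def diag_def by auto
          define q where "q = par (x,y)"
          have q: "q = (x, y-1) \<or> q = (x-1, y)" using P unfolding q_def down_of_def left_of_def by auto
          have dq: "diag q = 2^r" using q r unfolding diag_def n_def by auto
          have fq: "0 < fst q" "fst q < 2^r" using q r x2 unfolding n_def by auto
          have "\<bar>Er a q\<bar> \<le> 1"
          proof -
            have "diag q = n - 1" using dq r by simp
            then have "real_of_int (diag q) = real_of_int n - 1" by simp
            then have "Er a q = real_of_int (fst q) - (real_of_int n - 1) * a" unfolding Er_def by simp
            also have "\<dots> = real_of_int (fst q) - real_of_int n * a + a" by (simp add: algebra_simps)
            finally have "Er a q = real_of_int (fst q) - real_of_int x + a" using an by simp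
            moreover have "real_of_int (fst q) = real_of_int x \<or> real_of_int (fst q) = real_of_int x - 1" using q by auto
            moreover have "0 \<le> a" "a \<le> 1" unfolding a_def using xy0 n_def by (simp_all add: divide_simps)
            ultimately show ?thesis by auto
          qed
          then have "chainok par a q" using skel'[OF v dq] P fq unfolding q_def by blast
          then show ?thesis using chainok_step[of a "(x,y)" par] E0 pxy dq r x2 unfolding q_def diag_def n_def by auto
        next
          case n4: False
          have "2 \<le> nat n" using x2 n_def by simp
          then obtain i where i: "2^i < nat n" "nat n \<le> 2^(i+1)" using ex_level by blast
          define K :: int where "K = 2^i"
          have "int (2^i) < int (nat n)" using i(1) by (simp only: of_nat_less_iff)
          then have Ki1: "K < n" using xy0 unfolding K_def by simp
          have "int (nat n) \<le> int (2^(i+1))" using i(2) by (simp only: of_nat_le_iff)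
          then have Ki2: "n \<le> 2*K" using xy0 unfolding K_def by simp
          note Ki = Ki1 Ki2
          have i2: "i \<ge> 2"
          proof (rule ccontr)
            assume "\<not> i \<ge> 2"
            then have "K \<le> 2^1" unfolding K_def by (intro power_increasing) auto
            then have "n = 4" "x = 2" "y = 2" using Ki x2 n_def by auto
            then show False using n3 pow2_self[of 2] by simp
          qed
          have K4': "K \<ge> 4" unfolding K_def using K4 i2 by simp
          define j where "j = \<lfloor>real_of_int x * real_of_int K / real_of_int n\<rfloor>"
          have Kr: "real_of_int K = 2^i" unfolding K_def by simp
          have Ka: "real_of_int K * a = real_of_int x * real_of_int K / real_of_int n" unfolding a_def by simp
          have jfl: "real_of_int j \<le> real_of_int K * a" "real_of_int K * a < real_of_int j + 1"
            unfolding Ka j_def by linarith+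
          have "x * K \<ge> n"
          proof -
            have "x * K \<ge> 2 * K" using x2 K4' by simp
            then show ?thesis using Ki by linarith
          qed
          then have "real_of_int x * real_of_int K \<ge> real_of_int n" by (metis of_int_le_iff of_int_mult)
          then have "real_of_int x * real_of_int K / real_of_int n \<ge> 1" using nr by simp
          then have j1: "j \<ge> 1" unfolding j_def by linarith
          have "y * K > n"
          proof -
            have "y * K \<ge> 2 * K" using x2 K4' by simp
            moreover have "\<not> (y * K = n)"
            proof
              assume h: "y * K = n"
              then have n2: "n = 2*K" using \<open>y * K \<ge> 2*K\<close> Ki by linarith
              then have "y * K = 2 * K" using h by simp
              then have "y = 2" using K4' by simp
              then show False using n3 n2 pow2_self[of "i+1"] unfolding K_def by simp
            qed
            ultimately show ?thesis using Ki by linarith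
          qed
          then have "real_of_int x * real_of_int K < (real_of_int K - 1) * real_of_int n"
          proof -
            have "x * K < (K - 1) * n" using \<open>y * K > n\<close> n_def by (simp add: algebra_simps)
            then show ?thesis by (metis of_int_less_iff of_int_mult of_int_diff of_int_1)
          qed
          then have "real_of_int x * real_of_int K / real_of_int n < real_of_int K - 1" using nr by (simp add: divide_simps)
          then have "real_of_int j < real_of_int (K - 1)" unfolding j_def by linarith
          then have "j < K - 1" by (simp only: of_int_less_iff)
          then have jK: "j \<le> 2^i - 2" unfolding K_def by simp
          define c :: real where "c = (2 * real_of_int j + 1) / 2^(i+1)"
          have ca: "\<bar>c - a\<bar> \<le> 1/(2*2^i)"
          proof -
            have "c - a = (2 * real_of_int j + 1 - 2 * (real_of_int K * a)) / (2 * 2^i)" unfolding c_def Kr by (simp add: field_simps)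
            moreover have "\<bar>2 * real_of_int j + 1 - 2 * (real_of_int K * a)\<bar> \<le> 1" using jfl by simp
            ultimately show ?thesis by (simp add: divide_right_mono)
          qed
          have ab: "real_of_int j \<le> 2^i * a" "2^i * a < real_of_int j + 1" using jfl Kr by auto
          have tr: "2^i < diag (x,y) \<Longrightarrow> diag (x,y) \<le> 2*2^i \<Longrightarrow> InvW a c (x,y) \<Longrightarrow> \<bar>Er a (x,y)\<bar> < 3/2 \<Longrightarrow> chainok par a (x,y)"
          proof (rule track[OF v i2 j1 jK ab c_def ab(1) less_imp_le[OF ab(2)]])
            show "chainok par a u" if "diag u = 2^i" "odd (fst u)" "0 < fst u" "fst u < 2^i" "\<bar>Er a u\<bar> \<le> 1" for u
              using skel[OF v, of i] that by blast
            show "\<bar>Er a u\<bar> < 3/2" if u: "2^i < diag u" "diag u < 2*2^i" "InvW a c u" for u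
            proof -
              have "real_of_int ((2::int)^i) < real_of_int (diag u)" "real_of_int (diag u) < real_of_int (2*(2::int)^i)"
                using u(1,2) by (simp_all only: of_int_less_iff)
              then have r: "2^i < real_of_int (diag u)" "real_of_int (diag u) < 2*2^i" by simp_all
              have "\<bar>real_of_int (fst u) - real_of_int (diag u) * a\<bar> < 3/2"
                by (rule inv_compat[of "2^i"]) (use r ca u(3) in \<open>auto simp: InvW_def\<close>)
              then show ?thesis unfolding Er_def .
            qed
          qed
          have "InvR a c (real_of_int x) (real_of_int n)"
          proof -
            have e: "real_of_int x \<le> real_of_int n * a" "real_of_int x \<ge> real_of_int n * a" using an by simp_all
            consider "\<bar>real_of_int x - real_of_int n * c\<bar> \<le> 1/2" | "real_of_int x - real_of_int n * c > 1/2"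
              | "real_of_int x - real_of_int n * c < -1/2" by linarith
            then show ?thesis unfolding InvR_def using e by cases blast+
          qed
          then have "InvW a c (x,y)" unfolding InvW_def diag_def n_def by simp
          then show ?thesis using tr Ki E0 pxy unfolding K_def n_def diag_def by auto
        qed
      qed
    qed
  qed
  then show ?thesis using pxy unfolding a_def n_def diag_def by simp
qed



lemma seg_le:
  assumes "t \<in> {0..1::real}"
  shows "seg_dist v p \<le> linf (to_real v) (t * real_of_int (fst p), t * real_of_int (snd p))"
  unfolding seg_dist_def
proof (rule cINF_lower[OF _ assms])
  show "bdd_below ((\<lambda>t. linf (to_real v) (t * real_of_int (fst p), t * real_of_int (snd p))) ` {0..1})"
    by (rule bdd_belowI[of _ 0]) (auto simp: linf_def)
qed

theorem lemma3:
  fixes par :: "int \<times> int \<Rightarrow> int \<times> int"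
  assumes "valid_parent par"
    and "p \<in> Q1"
  shows "\<forall>v \<in> Rset par p. seg_dist v p < 3 / 2"
proof
  fix v assume "v \<in> Rset par p"
  then obtain k where vk: "v = (par ^^ k) p" and nz: "\<forall>m < k. (par ^^ m) p \<noteq> orig" unfolding Rset_def by auto
  show "seg_dist v p < 3/2"
  proof (cases "p = orig")
    case True
    then have "k = 0" using nz by (cases k) auto
    then have "v = orig" using vk True by simp
    then have "seg_dist v p \<le> linf (to_real v) (0 * real_of_int (fst p), 0 * real_of_int (snd p))"
      using seg_le[of 0 v p] by simp
    also have "\<dots> = 0" using \<open>v = orig\<close> unfolding linf_def to_real_def orig_def by simp
    finally show ?thesis by simp
  next
    case False
    obtain x y where pxy: "p = (x,y)" by (cases p)
    define n where "n = diag p"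
    have n0: "n > 0" using assms(2) False pxy unfolding Q1_def orig_def diag_def n_def by auto
    have kn: "k \<le> nat n"
    proof (rule ccontr)
      assume "\<not> k \<le> nat n"
      then have "nat n < k" by simp
      then show False using nz chain_end[OF assms] unfolding n_def by blast
    qed
    have ch: "v \<in> Q1" "diag v = n - int k" using chain[OF assms kn[unfolded n_def]] vk n_def by auto
    define a where "a = real_of_int (fst p) / real_of_int n"
    have "chainok par a p" using main_chain[OF assms False] unfolding a_def n_def .
    then have E: "\<bar>Er a v\<bar> < 3/2" using kn vk unfolding chainok_def n_def by auto
    have dv0: "diag v \<ge> 0" using ch unfolding Q1_def diag_def by auto
    define t where "t = real_of_int (diag v) / real_of_int n"
    have t01: "t \<in> {0..1}" unfolding t_def using n0 dv0 ch by auto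
    obtain vx vy where vxy: "v = (vx, vy)" by (cases v)
    have nr: "real_of_int n = real_of_int x + real_of_int y" using pxy n_def unfolding diag_def by simp
    have dvr: "real_of_int (diag v) = real_of_int vx + real_of_int vy" using vxy unfolding diag_def by simp
    have nrp: "real_of_int n > 0" using n0 by simp
    have A: "real_of_int vx - t * real_of_int x = Er a v"
      unfolding Er_def a_def t_def using vxy pxy by simp
    have B: "real_of_int vy - t * real_of_int y = - Er a v"
      unfolding Er_def a_def t_def using vxy pxy nrp dvr nr by (simp add: field_simps)
    have "seg_dist v p \<le> linf (to_real v) (t * real_of_int (fst p), t * real_of_int (snd p))"
      by (rule seg_le[OF t01])
    also have "\<dots> = \<bar>Er a v\<bar>" unfolding linf_def to_real_def using A B vxy pxy by simp
    finally show ?thesis using E by simp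
  qed
qed

end
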